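(* Let $G$ be a graph with no isolated vertices. Then $b_{tR}(G)=1$ if and only if $G$ has an edge $uv$ such that $G-uv$ has no isolated vertices and every $\gamma_{tR}(G)$-function $f=(V_0,V_1,V_2)$ satisfies (i) $G[V_1\cup V_2]-uv$ has an isolated vertex, or (ii) $u\in V_2$ and $v\in \mathrm{epn}(u,V_2)\cap V_0$, or $v\in V_2$ and $u\in\mathrm{epn}(v,V_2)\cap V_0$.
   Context: A TRDF on $G=(V,E)$ is a function $f:V\to\{0,1,2\}$ such that every $v$ with $f(v)=0$ has a neighbor $u$ with $f(u)=2$ and the subgraph induced by $\{v:f(v)>0\}$ has no isolated vertices; $\gamma_{tR}(G)$ is its minimum weight and a $\gamma_{tR}(G)$-function is a TRDF of that weight. A function $f$ is identified with the partition $(V_0,V_1,V_2)$ where $V_i=\{v:f(v)=i\}$. $b_{tR}(G)$ is the minimum $|E'|$ such that $G-E'$ has no isolated vertices and $\gamma_{tR}(G-E')>\gamma_{tR}(G)$ ($\infty$ if none). For $S\subseteq V$ and $v\in S$, $\mathrm{epn}(v,S)=\{w\in V\setminus S: N(w)\cap S=\{v\}\}$. $G[X]$ is the induced subgraph. *)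

theory Defs
  imports Main "HOL-Library.Extended_Nat"
begin

definition simple_graph :: "'a set \<Rightarrow> 'a set set \<Rightarrow> bool" where
  "simple_graph V E \<longleftrightarrow> finite V \<and> (\<forall>e\<in>E. e \<subseteq> V \<and> card e = 2)"

definition nbrs :: "'a set set \<Rightarrow> 'a \<Rightarrow> 'a set" where
  "nbrs E v = {u. {u, v} \<in> E}"

definition no_isolated :: "'a set \<Rightarrow> 'a set set \<Rightarrow> bool" where
  "no_isolated V E \<longleftrightarrow> (\<forall>v\<in>V. \<exists>u. {u, v} \<in> E)"

definition cls :: "'a set \<Rightarrow> ('a \<Rightarrow> nat) \<Rightarrow> nat \<Rightarrow> 'a set" where
  "cls V f i = {v\<in>V. f v = i}"

definition is_TRDF :: "'a set \<Rightarrow> 'a set set \<Rightarrow> ('a \<Rightarrow> nat) \<Rightarrow> bool" where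
  "is_TRDF V E f \<longleftrightarrow>
     (\<forall>v\<in>V. f v \<in> {0, 1, 2}) \<and>
     (\<forall>v\<in>V. f v = 0 \<longrightarrow> (\<exists>u\<in>V. {u, v} \<in> E \<and> f u = 2)) \<and>
     (\<forall>v\<in>V. f v > 0 \<longrightarrow> (\<exists>u\<in>V. {u, v} \<in> E \<and> f u > 0))"

definition weight :: "'a set \<Rightarrow> ('a \<Rightarrow> nat) \<Rightarrow> nat" where
  "weight V f = (\<Sum>v\<in>V. f v)"

definition gamma_tR :: "'a set \<Rightarrow> 'a set set \<Rightarrow> nat" where
  "gamma_tR V E = (LEAST w. \<exists>f. is_TRDF V E f \<and> weight V f = w)"

definition is_gamma_tR_function :: "'a set \<Rightarrow> 'a set set \<Rightarrow> ('a \<Rightarrow> nat) \<Rightarrow> bool" where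
  "is_gamma_tR_function V E f \<longleftrightarrow> is_TRDF V E f \<and> weight V f = gamma_tR V E"

(* total Roman bondage number; Inf {} = \<infinity> in enat *)
definition b_tR :: "'a set \<Rightarrow> 'a set set \<Rightarrow> enat" where
  "b_tR V E = Inf {enat (card E') | E'. E' \<subseteq> E \<and> no_isolated V (E - E')
                     \<and> gamma_tR V (E - E') > gamma_tR V E}"

definition epn :: "'a set \<Rightarrow> 'a set set \<Rightarrow> 'a \<Rightarrow> 'a set \<Rightarrow> 'a set" where
  "epn V E v S = {w\<in>V - S. nbrs E w \<inter> S = {v}}"

definition induced_has_isolated :: "'a set \<Rightarrow> 'a set set \<Rightarrow> bool" where
  "induced_has_isolated X E \<longleftrightarrow> (\<exists>w\<in>X. \<not> (\<exists>x\<in>X. {w, x} \<in> E))"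

end

theory Submission
  imports Defs
begin

lemma trdf_two:
  assumes "simple_graph V E" "no_isolated V E"
  shows "is_TRDF V E (\<lambda>_. 2)"
  unfolding is_TRDF_def
proof (intro conjI ballI impI)
  fix v assume v: "v \<in> V"
  then obtain u where u: "{u, v} \<in> E" using assms(2) unfolding no_isolated_def by blast
  then have "u \<in> V" using assms(1) unfolding simple_graph_def by blast
  with u show "\<exists>u\<in>V. {u, v} \<in> E \<and> (2::nat) = 2" by blast
  with u show "\<exists>u\<in>V. {u, v} \<in> E \<and> 0 < (2::nat)" by auto
qed auto

lemma gamma_le: "is_TRDF V E f \<Longrightarrow> gamma_tR V E \<le> weight V f"
  unfolding gamma_tR_def by (rule Least_le) blast

lemma gamma_ex: "is_TRDF V E g \<Longrightarrow> \<exists>f. is_TRDF V E f \<and> weight V f = gamma_tR V E"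
  unfolding gamma_tR_def by (rule LeastI_ex) blast

lemma trdf_mono: "E' \<subseteq> E \<Longrightarrow> is_TRDF V E' f \<Longrightarrow> is_TRDF V E f"
  unfolding is_TRDF_def by blast

lemma key:
  assumes sg: "simple_graph V E" and ni: "no_isolated V E'" and sub: "E' \<subseteq> E"
  shows "gamma_tR V E' > gamma_tR V E \<longleftrightarrow>
     (\<forall>f. is_gamma_tR_function V E f \<longrightarrow> \<not> is_TRDF V E' f)"
proof
  assume gt: "gamma_tR V E' > gamma_tR V E"
  show "\<forall>f. is_gamma_tR_function V E f \<longrightarrow> \<not> is_TRDF V E' f"
  proof (intro allI impI notI)
    fix f assume "is_gamma_tR_function V E f" "is_TRDF V E' f"
    then show False using gamma_le[of V E' f] gt unfolding is_gamma_tR_function_def by linarith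
  qed
next
  assume H: "\<forall>f. is_gamma_tR_function V E f \<longrightarrow> \<not> is_TRDF V E' f"
  have sg': "simple_graph V E'" using sg sub unfolding simple_graph_def by blast
  obtain g where g: "is_TRDF V E' g" "weight V g = gamma_tR V E'"
    using gamma_ex[OF trdf_two[OF sg' ni]] by blast
  have gE: "is_TRDF V E g" using trdf_mono[OF sub g(1)] .
  have "gamma_tR V E \<le> weight V g" using gamma_le[OF gE] .
  moreover have "\<not> is_gamma_tR_function V E g" using H g(1) by blast
  ultimately show "gamma_tR V E' > gamma_tR V E" using g(2) gE
    unfolding is_gamma_tR_function_def by linarith
qed

lemma char:
  assumes sg: "simple_graph V E" and f: "is_TRDF V E f" and e: "{u, v} \<in> E"
  shows "\<not> is_TRDF V (E - {{u, v}}) f \<longleftrightarrow>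
         induced_has_isolated (cls V f 1 \<union> cls V f 2) (E - {{u, v}})
         \<or> (u \<in> cls V f 2 \<and> v \<in> epn V E u (cls V f 2) \<inter> cls V f 0)
         \<or> (v \<in> cls V f 2 \<and> u \<in> epn V E v (cls V f 2) \<inter> cls V f 0)"
    (is "?L \<longleftrightarrow> ?R")
proof
  have f1: "\<forall>v\<in>V. f v \<in> {0, 1, 2}" using f unfolding is_TRDF_def by blast
  have f2: "\<forall>v\<in>V. f v = 0 \<longrightarrow> (\<exists>u\<in>V. {u, v} \<in> E \<and> f u = 2)" using f unfolding is_TRDF_def by blast
  have uv: "u \<noteq> v" using e sg unfolding simple_graph_def by fastforce
  have uV: "u \<in> V" "v \<in> V" using e sg unfolding simple_graph_def by auto
  assume L: ?L
  then consider
    (a) w where "w \<in> V" "f w = 0" "\<not> (\<exists>x\<in>V. {x, w} \<in> E - {{u, v}} \<and> f x = 2)"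
  | (b) w where "w \<in> V" "f w > 0" "\<not> (\<exists>x\<in>V. {x, w} \<in> E - {{u, v}} \<and> f x > 0)"
    using f1 unfolding is_TRDF_def by blast
  then show ?R
  proof cases
    case (b w)
    have "w \<in> cls V f 1 \<union> cls V f 2" using b f1 unfolding cls_def by auto
    moreover have "\<not> (\<exists>x\<in>cls V f 1 \<union> cls V f 2. {w, x} \<in> E - {{u, v}})"
      using b(3) unfolding cls_def by (auto simp: insert_commute)
    ultimately show ?thesis unfolding induced_has_isolated_def by blast
  next
    case (a w)
    obtain x where x: "x \<in> V" "{x, w} \<in> E" "f x = 2" using f2 a by blast
    have xw: "{x, w} = {u, v}" using a x by blast
    have "x \<noteq> w" using x a by auto
    then have c: "(x = u \<and> w = v) \<or> (x = v \<and> w = u)" using xw by (auto simp: doubleton_eq_iff)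
    show ?thesis
    proof (cases "x = u \<and> w = v")
      case True
      have "nbrs E v \<inter> cls V f 2 = {u}"
      proof
        show "{u} \<subseteq> nbrs E v \<inter> cls V f 2" using e True x unfolding nbrs_def cls_def by auto
        show "nbrs E v \<inter> cls V f 2 \<subseteq> {u}"
        proof
          fix y assume y: "y \<in> nbrs E v \<inter> cls V f 2"
          then have "{y, v} \<in> E" "y \<in> V" "f y = 2" unfolding nbrs_def cls_def by auto
          then have "{y, v} = {u, v}" using a True by blast
          then show "y \<in> {u}" using \<open>f y = 2\<close> a True by (auto simp: doubleton_eq_iff)
        qed
      qed
      then show ?thesis using True x a unfolding epn_def cls_def by auto
    next
      case False
      then have T: "x = v \<and> w = u" using c by blast
      have "nbrs E u \<inter> cls V f 2 = {v}"
      proof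
        show "{v} \<subseteq> nbrs E u \<inter> cls V f 2" using e T x unfolding nbrs_def cls_def by (auto simp: insert_commute)
        show "nbrs E u \<inter> cls V f 2 \<subseteq> {v}"
        proof
          fix y assume y: "y \<in> nbrs E u \<inter> cls V f 2"
          then have "{y, u} \<in> E" "y \<in> V" "f y = 2" unfolding nbrs_def cls_def by auto
          then have "{y, u} = {u, v}" using a T by blast
          then show "y \<in> {v}" using \<open>f y = 2\<close> a T by (auto simp: doubleton_eq_iff)
        qed
      qed
      then show ?thesis using T x a unfolding epn_def cls_def by auto
    qed
  qed
next
  assume R: ?R
  show ?L
  proof
    assume t: "is_TRDF V (E - {{u, v}}) f"
    have t2: "\<forall>b\<in>V. f b = 0 \<longrightarrow> (\<exists>a\<in>V. {a, b} \<in> E - {{u, v}} \<and> f a = 2)"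
      and t3: "\<forall>b\<in>V. f b > 0 \<longrightarrow> (\<exists>a\<in>V. {a, b} \<in> E - {{u, v}} \<and> f a > 0)"
      using t unfolding is_TRDF_def by blast+
    show False using R
    proof (elim disjE conjE)
      assume "induced_has_isolated (cls V f 1 \<union> cls V f 2) (E - {{u, v}})"
      then obtain w where w: "w \<in> cls V f 1 \<union> cls V f 2"
        "\<not> (\<exists>x\<in>cls V f 1 \<union> cls V f 2. {w, x} \<in> E - {{u, v}})"
        unfolding induced_has_isolated_def by blast
      then have "w \<in> V" "f w > 0" unfolding cls_def by auto
      then obtain x where "x \<in> V" "{x, w} \<in> E - {{u, v}}" "f x > 0" using t3 by blast
      moreover have "f x \<le> 2" using f \<open>x \<in> V\<close> unfolding is_TRDF_def by auto
      ultimately show False using w(2) unfolding cls_def by (auto simp: insert_commute)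
    next
      assume "u \<in> cls V f 2" "v \<in> epn V E u (cls V f 2) \<inter> cls V f 0"
      then have v: "v \<in> V" "f v = 0" "nbrs E v \<inter> cls V f 2 = {u}" unfolding epn_def cls_def by auto
      have "\<exists>a\<in>V. {a, v} \<in> E - {{u, v}} \<and> f a = 2" using mp[OF bspec[OF t2 v(1)] v(2)] .
      then obtain x where x: "x \<in> V" "{x, v} \<in> E - {{u, v}}" "f x = 2" by (elim bexE conjE)
      then have "x \<in> nbrs E v \<inter> cls V f 2" unfolding nbrs_def cls_def by auto
      then have "x = u" using v by auto
      then show False using x by auto
    next
      assume "v \<in> cls V f 2" "u \<in> epn V E v (cls V f 2) \<inter> cls V f 0"
      then have v: "u \<in> V" "f u = 0" "nbrs E u \<inter> cls V f 2 = {v}" unfolding epn_def cls_def by auto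
      have "\<exists>a\<in>V. {a, u} \<in> E - {{u, v}} \<and> f a = 2" using mp[OF bspec[OF t2 v(1)] v(2)] .
      then obtain x where x: "x \<in> V" "{x, u} \<in> E - {{u, v}}" "f x = 2" by (elim bexE conjE)
      then have "x \<in> nbrs E u \<inter> cls V f 2" unfolding nbrs_def cls_def by auto
      then have "x = v" using v by auto
      then show False using x by (auto simp: insert_commute)
    qed
  qed
qed

lemma btr1:
  assumes sg: "simple_graph V E"
  shows "b_tR V E = 1 \<longleftrightarrow> (\<exists>e\<in>E. no_isolated V (E - {e}) \<and> gamma_tR V (E - {e}) > gamma_tR V E)"
proof -
  define S where "S = {enat (card E') | E'. E' \<subseteq> E \<and> no_isolated V (E - E')
                     \<and> gamma_tR V (E - E') > gamma_tR V E}"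
  have finE: "finite E"
  proof -
    have "E \<subseteq> Pow V" using sg unfolding simple_graph_def by blast
    moreover have "finite V" using sg unfolding simple_graph_def by blast
    ultimately show ?thesis using finite_subset by blast
  qed
  have b: "b_tR V E = Inf S" unfolding b_tR_def S_def by simp
  have ge1: "\<forall>x\<in>S. 1 \<le> x"
  proof
    fix x assume "x \<in> S"
    then obtain E' where E': "x = enat (card E')" "E' \<subseteq> E" "gamma_tR V (E - E') > gamma_tR V E"
      unfolding S_def by blast
    have "E' \<noteq> {}" using E'(3) by auto
    then have "card E' \<noteq> 0" using E'(2) finE by (meson card_0_eq finite_subset)
    then show "1 \<le> x" using E'(1) by (simp add: one_enat_def)
  qed
  have one: "1 \<in> S \<longleftrightarrow> (\<exists>e\<in>E. no_isolated V (E - {e}) \<and> gamma_tR V (E - {e}) > gamma_tR V E)"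
  proof
    assume "1 \<in> S"
    then obtain E' where E': "1 = enat (card E')" "E' \<subseteq> E" "no_isolated V (E - E')" "gamma_tR V (E - E') > gamma_tR V E"
      unfolding S_def by blast
    then have "card E' = 1" by (simp add: one_enat_def)
    then obtain e where "E' = {e}" using card_1_singletonE by blast
    then show "\<exists>e\<in>E. no_isolated V (E - {e}) \<and> gamma_tR V (E - {e}) > gamma_tR V E" using E' by blast
  next
    assume "\<exists>e\<in>E. no_isolated V (E - {e}) \<and> gamma_tR V (E - {e}) > gamma_tR V E"
    then obtain e where "e \<in> E" "no_isolated V (E - {e})" "gamma_tR V (E - {e}) > gamma_tR V E" by blast
    then show "1 \<in> S" unfolding S_def by (auto simp: one_enat_def intro!: exI[of _ "{e}"])
  qed
  have "Inf S = 1 \<longleftrightarrow> 1 \<in> S"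
  proof
    assume i: "Inf S = 1"
    then have "S \<noteq> {}" by (auto simp: top_enat_def)
    then have "Inf S \<in> S" unfolding Inf_enat_def by (auto intro: LeastI)
    then show "1 \<in> S" using i by simp
  next
    assume "1 \<in> S"
    then have "Inf S \<le> 1" by (rule Inf_lower)
    moreover have "1 \<le> Inf S" using ge1 by (simp add: le_Inf_iff)
    ultimately show "Inf S = 1" by simp
  qed
  then show ?thesis using b one by simp
qed

theorem mainTheorem13:
  fixes V :: "'a set" and E :: "'a set set"
  assumes "simple_graph V E" and "no_isolated V E"
  shows "b_tR V E = 1 \<longleftrightarrow>
    (\<exists>u v. {u, v} \<in> E \<and> no_isolated V (E - {{u, v}}) \<and>
      (\<forall>f. is_gamma_tR_function V E f \<longrightarrow>
         induced_has_isolated (cls V f 1 \<union> cls V f 2) (E - {{u, v}})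
         \<or> (u \<in> cls V f 2 \<and> v \<in> epn V E u (cls V f 2) \<inter> cls V f 0)
         \<or> (v \<in> cls V f 2 \<and> u \<in> epn V E v (cls V f 2) \<inter> cls V f 0)))"
  (is "_ \<longleftrightarrow> (\<exists>u v. ?P u v)")
proof -
  have step: "(no_isolated V (E - {{u, v}}) \<and> gamma_tR V (E - {{u, v}}) > gamma_tR V E) \<longleftrightarrow> ?P u v"
    if e: "{u, v} \<in> E" for u v
  proof -
    have "no_isolated V (E - {{u, v}}) \<Longrightarrow> gamma_tR V (E - {{u, v}}) > gamma_tR V E \<longleftrightarrow>
       (\<forall>f. is_gamma_tR_function V E f \<longrightarrow> \<not> is_TRDF V (E - {{u, v}}) f)"
      using key[OF assms(1), of "E - {{u, v}}"] by blast
    moreover have "\<And>f. is_gamma_tR_function V E f \<Longrightarrow> (\<not> is_TRDF V (E - {{u, v}}) f \<longleftrightarrow>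
         induced_has_isolated (cls V f 1 \<union> cls V f 2) (E - {{u, v}})
         \<or> (u \<in> cls V f 2 \<and> v \<in> epn V E u (cls V f 2) \<inter> cls V f 0)
         \<or> (v \<in> cls V f 2 \<and> u \<in> epn V E v (cls V f 2) \<inter> cls V f 0))"
      using char[OF assms(1) _ e] unfolding is_gamma_tR_function_def by blast
    ultimately show ?thesis using e by blast
  qed
  have ex: "(\<exists>e\<in>E. no_isolated V (E - {e}) \<and> gamma_tR V (E - {e}) > gamma_tR V E) \<longleftrightarrow>
      (\<exists>u v. {u, v} \<in> E \<and> no_isolated V (E - {{u, v}}) \<and> gamma_tR V (E - {{u, v}}) > gamma_tR V E)"
  proof
    assume "\<exists>e\<in>E. no_isolated V (E - {e}) \<and> gamma_tR V (E - {e}) > gamma_tR V E"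
    then obtain e where e: "e \<in> E" "no_isolated V (E - {e})" "gamma_tR V (E - {e}) > gamma_tR V E" by blast
    then have "card e = 2" using assms(1) unfolding simple_graph_def by blast
    then obtain u v where "e = {u, v}" by (meson card_2_iff)
    then show "\<exists>u v. {u, v} \<in> E \<and> no_isolated V (E - {{u, v}}) \<and> gamma_tR V (E - {{u, v}}) > gamma_tR V E"
      using e by blast
  qed blast
  show ?thesis using btr1[OF assms(1)] ex step by blast
qed

end
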